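(* Let $d\ge3$ and let $G$ be a $d$-map endowed with a $d$-GS arc labeling. Then for every inner face $f$ of $G$, the $f$-clockwise jumps are all non-zero and they sum to $d$.
   Context: A plane map is a connected graph (loops, multiple edges allowed) embedded in the plane without crossings, up to deformation; outer (unbounded) face, inner faces; outer vertices/edges lie on the outer face; $\deg(f)$ = number of corners of face $f$. For $d\ge3$, a $d$-map has inner faces of degree $\le d$ and outer face of degree $d$ bounded by a simple cycle, with outer vertices $v_1,\dots,v_d$ clockwise (indices mod $d$). An arc is a directed edge; $-a$ its opposite. An arc labeling assigns a label in $[d]$ to every inner arc and label $i$ to the outer arc $(v_i,v_{i+1})$ for each $i\in[d]$. Label jump from label $i$ to $i'$: the $\delta\in\{0,\dots,d-1\}$ with $i+\delta\equiv i'\pmod d$. For an inner vertex $v$, a $v$-clockwise jump is the jump from an arc with initial vertex $v$ to the next such arc in clockwise order around $v$. For an inner face $f$, consider the arcs incident to $f$ having $f$ on their right; an $f$-clockwise jump is the jump from such an arc to the next one in clockwise order around $f$. A $d$-GS arc labeling is an arc labeling such that: (AL0) for all $i$, every inner arc with initial vertex $v_i$ has label $i$; (AL1) for every inner vertex $v$, the $v$-clockwise jumps sum to $d$; (AL2) for two consecutive arcs $a,a'$ in clockwise order around an inner vertex $v$ (both with initial vertex $v$), the jump from $a$ to $a'$ is at most $d-\deg(f)$, where $f$ is the face containing the corner between $a$ and $a'$; (AL3) for opposite inner arcs $a,-a$, the jump from the label of $a$ to the label of $-a$ equals $d+1-\deg(f)$, where $f$ is the face on the right of $a$. *)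

theory Defs
  imports Main
begin

text \<open>Plane maps as combinatorial maps (rotation systems) on a finite set D of arcs (darts).
  \<alpha> a is the opposite arc -a; \<sigma> a is the next arc after a in clockwise order around its
  initial vertex. Vertices = \<sigma>-orbits, edges = \<alpha>-orbits, faces = orbits of
  face_succ, which maps an arc a to the next arc (clockwise around the face) having
  the same face on its right. Planarity = connectivity + Euler's formula V - E + F = 2.\<close>

definition orb :: "('a \<Rightarrow> 'a) \<Rightarrow> 'a \<Rightarrow> 'a set" where
  "orb f a = range (\<lambda>n. (f ^^ n) a)"

definition face_succ :: "'a set \<Rightarrow> ('a \<Rightarrow> 'a) \<Rightarrow> ('a \<Rightarrow> 'a) \<Rightarrow> 'a \<Rightarrow> 'a" where
  "face_succ D \<alpha> \<sigma> a = inv_into D \<sigma> (\<alpha> a)"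

definition plane_map :: "'a set \<Rightarrow> ('a \<Rightarrow> 'a) \<Rightarrow> ('a \<Rightarrow> 'a) \<Rightarrow> bool" where
  "plane_map D \<alpha> \<sigma> \<longleftrightarrow>
     finite D \<and> D \<noteq> {} \<and> bij_betw \<sigma> D D \<and>
     (\<forall>a\<in>D. \<alpha> a \<in> D \<and> \<alpha> a \<noteq> a \<and> \<alpha> (\<alpha> a) = a) \<and>
     (\<forall>a\<in>D. \<forall>b\<in>D. (a, b) \<in> ({(x, \<sigma> x) | x. x \<in> D} \<union> {(x, \<alpha> x) | x. x \<in> D})\<^sup>*) \<and>
     int (card (orb \<sigma> ` D)) - int (card (orb \<alpha> ` D))
       + int (card (orb (face_succ D \<alpha> \<sigma>) ` D)) = 2"

text \<open>The arc oa is (v_1, v_d): the outer face is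
  on the right of arcs (v_{i+1}, v_i).
  The outer face boundary is a simple cycle: its d arcs have pairwise distinct initial vertices.\<close>

definition d_map :: "'a set \<Rightarrow> ('a \<Rightarrow> 'a) \<Rightarrow> ('a \<Rightarrow> 'a) \<Rightarrow> nat \<Rightarrow> 'a \<Rightarrow> bool" where
  "d_map D \<alpha> \<sigma> d oa \<longleftrightarrow>
     plane_map D \<alpha> \<sigma> \<and> 3 \<le> d \<and> oa \<in> D \<and>
     card (orb (face_succ D \<alpha> \<sigma>) oa) = d \<and>
     inj_on (orb \<sigma>) (orb (face_succ D \<alpha> \<sigma>) oa) \<and>
     (\<forall>a\<in>D. a \<notin> orb (face_succ D \<alpha> \<sigma>) oa \<longrightarrow> card (orb (face_succ D \<alpha> \<sigma>) a) \<le> d)"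

text \<open>Outer arc (v_i, v_{i+1}) for i in {1..d}.\<close>
definition outer_arc :: "'a set \<Rightarrow> ('a \<Rightarrow> 'a) \<Rightarrow> ('a \<Rightarrow> 'a) \<Rightarrow> nat \<Rightarrow> 'a \<Rightarrow> nat \<Rightarrow> 'a" where
  "outer_arc D \<alpha> \<sigma> d oa i = \<alpha> ((face_succ D \<alpha> \<sigma> ^^ (d - i)) oa)"

definition inner_arc :: "'a set \<Rightarrow> ('a \<Rightarrow> 'a) \<Rightarrow> ('a \<Rightarrow> 'a) \<Rightarrow> 'a \<Rightarrow> 'a \<Rightarrow> bool" where
  "inner_arc D \<alpha> \<sigma> oa a \<longleftrightarrow> a \<in> D \<and> a \<notin> orb (face_succ D \<alpha> \<sigma>) oa
      \<and> \<alpha> a \<notin> orb (face_succ D \<alpha> \<sigma>) oa"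

text \<open>Inner vertex (represented by any arc with that initial vertex): no arc starting there
  lies on the outer face.\<close>
definition inner_vertex :: "'a set \<Rightarrow> ('a \<Rightarrow> 'a) \<Rightarrow> ('a \<Rightarrow> 'a) \<Rightarrow> 'a \<Rightarrow> 'a \<Rightarrow> bool" where
  "inner_vertex D \<alpha> \<sigma> oa a \<longleftrightarrow> a \<in> D \<and> orb \<sigma> a \<inter> orb (face_succ D \<alpha> \<sigma>) oa = {}"

definition jump :: "nat \<Rightarrow> nat \<Rightarrow> nat \<Rightarrow> nat" where
  "jump d i i' = (i' + d - i) mod d"

definition GS_labeling ::
  "'a set \<Rightarrow> ('a \<Rightarrow> 'a) \<Rightarrow> ('a \<Rightarrow> 'a) \<Rightarrow> nat \<Rightarrow> 'a \<Rightarrow> ('a \<Rightarrow> nat) \<Rightarrow> bool" where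
  "GS_labeling D \<alpha> \<sigma> d oa lab \<longleftrightarrow>
     (\<forall>a. inner_arc D \<alpha> \<sigma> oa a \<longrightarrow> lab a \<in> {1..d}) \<and>
     (\<forall>i\<in>{1..d}. lab (outer_arc D \<alpha> \<sigma> d oa i) = i) \<and>
     \<comment> \<open>AL0\<close>
     (\<forall>i\<in>{1..d}. \<forall>a. inner_arc D \<alpha> \<sigma> oa a \<and> orb \<sigma> a = orb \<sigma> (outer_arc D \<alpha> \<sigma> d oa i)
         \<longrightarrow> lab a = i) \<and>
     \<comment> \<open>AL1\<close>
     (\<forall>a. inner_vertex D \<alpha> \<sigma> oa a \<longrightarrow> (\<Sum>b\<in>orb \<sigma> a. jump d (lab b) (lab (\<sigma> b))) = d) \<and>
     \<comment> \<open>AL2: the corner between a and \<sigma> a lies in the face on the right of a\<close>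
     (\<forall>a. inner_vertex D \<alpha> \<sigma> oa a \<longrightarrow>
         jump d (lab a) (lab (\<sigma> a)) \<le> d - card (orb (face_succ D \<alpha> \<sigma>) a)) \<and>
     \<comment> \<open>AL3\<close>
     (\<forall>a. inner_arc D \<alpha> \<sigma> oa a \<longrightarrow>
         jump d (lab a) (lab (\<alpha> a)) = d + 1 - card (orb (face_succ D \<alpha> \<sigma>) a))"

end

theory Submission
  imports Defs
begin


lemma funpow_in_D: assumes "bij_betw f D D" "a \<in> D" shows "(f^^n) a \<in> D"
  using assms by (induct n) (auto simp: bij_betw_def)

lemma funpow_cancel:
  assumes "bij_betw f D D" "a \<in> D" "(f^^(i+k)) a = (f^^i) a" shows "(f^^k) a = a"
  using assms(3)
proof (induct i)
  case 0 then show ?case by simp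
next
  case (Suc i)
  have "(f^^(Suc (i+k))) a = (f^^(Suc i)) a" using Suc.prems by (simp only: add_Suc)
  then have "f ((f^^(i+k)) a) = f ((f^^i) a)" by (simp only: funpow.simps comp_apply)
  moreover have "(f^^(i+k)) a \<in> D" "(f^^i) a \<in> D" by (rule funpow_in_D[OF assms(1,2)])+
  ultimately have "(f^^(i+k)) a = (f^^i) a" using assms(1) unfolding bij_betw_def inj_on_def by blast
  then show ?case using Suc.hyps by blast
qed

lemma period_exists:
  assumes "finite D" "bij_betw f D D" "a \<in> D" shows "\<exists>p>0. (f^^p) a = a"
proof -
  have "range (\<lambda>n. (f^^n) a) \<subseteq> D" using funpow_in_D[OF assms(2,3)] by blast
  hence "finite (range (\<lambda>n. (f^^n) a))" using assms(1) finite_subset by blast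
  hence "\<not> inj (\<lambda>n. (f^^n) a)" using finite_imageD infinite_UNIV_nat by blast
  then obtain i j where ij: "i \<noteq> j" "(f^^i) a = (f^^j) a" unfolding inj_def by blast
  show ?thesis
  proof (cases "i < j")
    case True
    then have "(f^^(i+(j-i))) a = (f^^i) a" using ij by simp
    then have "(f^^(j-i)) a = a" by (rule funpow_cancel[OF assms(2,3)])
    then show ?thesis using True by (intro exI[of _ "j-i"]) simp
  next
    case False
    then have "(f^^(j+(i-j))) a = (f^^j) a" using ij by simp
    then have "(f^^(i-j)) a = a" by (rule funpow_cancel[OF assms(2,3)])
    then show ?thesis using False ij(1) by (intro exI[of _ "i-j"]) simp
  qed
qed

lemma funpow_mod_period:
  assumes "(f^^p) a = a" shows "(f^^n) a = (f^^(n mod p)) a"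
proof -
  have pm: "(f^^(p*m)) a = a" for m
    by (induct m) (simp_all add: funpow_add assms)
  have "n = n mod p + p * (n div p)" by simp
  then have "(f^^n) a = (f^^(n mod p)) ((f^^(p * (n div p))) a)"
    by (metis funpow_add comp_apply)
  then show ?thesis using pm by simp
qed

lemma self_in_orb: "a \<in> orb f a"
  unfolding orb_def by (metis funpow_0 rangeI)

lemma orb_sub_D: assumes "bij_betw f D D" "a \<in> D" shows "orb f a \<subseteq> D"
  unfolding orb_def using funpow_in_D[OF assms] by blast

lemma f_in_orb: assumes "b \<in> orb f a" shows "f b \<in> orb f a"
proof -
  obtain n where "b = (f^^n) a" using assms unfolding orb_def by blast
  then have "f b = (f^^(Suc n)) a" by simp
  then show ?thesis unfolding orb_def by blast
qed

lemma funpow_in_orb: assumes "b \<in> orb f a" shows "(f^^n) b \<in> orb f a"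
  using assms by (induct n) (auto intro: f_in_orb)

lemma orb_sub_orb: assumes "b \<in> orb f a" shows "orb f b \<subseteq> orb f a"
proof
  fix y assume "y \<in> orb f b"
  then obtain m where "y = (f^^m) b" unfolding orb_def by blast
  then show "y \<in> orb f a" using funpow_in_orb[OF assms, of m] by simp
qed

lemma orb_eq:
  assumes "finite D" "bij_betw f D D" "a \<in> D" "b \<in> orb f a" shows "orb f b = orb f a"
proof
  show "orb f b \<subseteq> orb f a" by (rule orb_sub_orb[OF assms(4)])
  obtain p where p: "p > 0" "(f^^p) a = a" using period_exists[OF assms(1,2,3)] by blast
  obtain n where n: "b = (f^^n) a" using assms(4) unfolding orb_def by blast
  have "(f^^((p-1)*n)) b = (f^^((p-1)*n + n)) a" using n by (simp add: funpow_add)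
  also have "(p-1)*n + n = n * p" using p by (cases p) auto
  also have "(f^^(n*p)) a = (f^^((n*p) mod p)) a" by (rule funpow_mod_period[OF p(2)])
  also have "\<dots> = a" by simp
  finally have "a \<in> orb f b" unfolding orb_def by (metis rangeI)
  then show "orb f a \<subseteq> orb f b" by (rule orb_sub_orb)
qed

lemma image_orb:
  assumes "finite D" "bij_betw f D D" "a \<in> D" shows "f ` orb f a = orb f a"
proof
  show "f ` orb f a \<subseteq> orb f a"
  proof
    fix y assume "y \<in> f ` orb f a"
    then obtain b where b: "b \<in> orb f a" "y = f b" by (rule imageE) simp
    show "y \<in> orb f a" unfolding b(2) by (rule f_in_orb[OF b(1)])
  qed
  show "orb f a \<subseteq> f ` orb f a"
  proof
    fix b assume b: "b \<in> orb f a"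
    have bD: "b \<in> D" by (rule subsetD[OF orb_sub_D[OF assms(2,3)] b])
    obtain p where p: "p > 0" "(f^^p) b = b" using period_exists[OF assms(1,2) bD] by (elim exE conjE)
    have c: "(f^^(p-1)) b \<in> orb f a" by (rule funpow_in_orb[OF b])
    have "f ((f^^(p-1)) b) = (f^^(Suc (p-1))) b" by simp
    also have "Suc (p-1) = p" using p(1) by simp
    finally have e: "b = f ((f^^(p-1)) b)" using p(2) by simp
    show "b \<in> f ` orb f a" by (rule image_eqI[of b f "(f^^(p-1)) b" "orb f a", OF e c])
  qed
qed

lemma bij_orb:
  assumes "finite D" "bij_betw f D D" "a \<in> D" shows "bij_betw f (orb f a) (orb f a)"
  using image_orb[OF assms] orb_sub_D[OF assms(2,3)] assms(2)
  unfolding bij_betw_def by (meson inj_on_subset)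

lemma sum_orb_shift:
  assumes "finite D" "bij_betw f D D" "a \<in> D"
  shows "(\<Sum>b\<in>orb f a. g (f b)) = (\<Sum>b\<in>orb f a. g b)"
  using sum.reindex_bij_betw[OF bij_orb[OF assms], of g] by simp

lemma orb_disj:
  assumes "finite D" "bij_betw f D D" "a \<in> D" "b \<in> D" "orb f a \<noteq> orb f b"
  shows "orb f a \<inter> orb f b = {}"
proof (rule ccontr)
  assume "orb f a \<inter> orb f b \<noteq> {}"
  then obtain x where x: "x \<in> orb f a" "x \<in> orb f b" by blast
  have "orb f x = orb f a" by (rule orb_eq[OF assms(1,2,3) x(1)])
  moreover have "orb f x = orb f b" by (rule orb_eq[OF assms(1,2,4) x(2)])
  ultimately show False using assms(5) by simp
qed

lemma sum_orbits:
  assumes "finite D" "bij_betw f D D" "S \<subseteq> D" "\<And>x. x \<in> S \<Longrightarrow> orb f x \<subseteq> S"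
  shows "sum g S = (\<Sum>c\<in>orb f ` S. sum g c)"
proof -
  have U: "\<Union>(orb f ` S) = S"
  proof
    show "\<Union>(orb f ` S) \<subseteq> S" using assms(4) by (simp add: UN_least)
    show "S \<subseteq> \<Union>(orb f ` S)"
    proof
      fix x assume "x \<in> S"
      then show "x \<in> \<Union>(orb f ` S)" using self_in_orb[of x f] by (intro UN_I[of x]) simp_all
    qed
  qed
  have fS: "finite S" by (rule finite_subset[OF assms(3,1)])
  have "sum g (\<Union>(orb f ` S)) = (sum \<circ> sum) g (orb f ` S)"
  proof (rule sum.Union_disjoint)
    show "\<forall>A\<in>orb f ` S. finite A"
    proof
      fix A assume "A \<in> orb f ` S"
      then obtain x where x: "x \<in> S" "A = orb f x" by (rule imageE) simp
      show "finite A" unfolding x(2) by (rule finite_subset[OF assms(4)[OF x(1)] fS])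
    qed
    show "\<forall>A\<in>orb f ` S. \<forall>B\<in>orb f ` S. A \<noteq> B \<longrightarrow> A \<inter> B = {}"
    proof (intro ballI impI)
      fix A B assume A: "A \<in> orb f ` S" and B: "B \<in> orb f ` S" and ne: "A \<noteq> B"
      obtain x where x: "x \<in> S" "A = orb f x" using A by (rule imageE) simp
      obtain y where y: "y \<in> S" "B = orb f y" using B by (rule imageE) simp
      have "x \<in> D" by (rule subsetD[OF assms(3) x(1)])
      moreover have "y \<in> D" by (rule subsetD[OF assms(3) y(1)])
      ultimately
      show "A \<inter> B = {}" unfolding x(2) y(2) using orb_disj[OF assms(1,2)] ne x(2) y(2) by simp
    qed
  qed
  then show ?thesis using U by simp
qed

lemma orbit_card:
  assumes "finite D" "bij_betw f D D" "a \<in> D"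
  shows "(f^^(card (orb f a))) a = a \<and> orb f a = (\<lambda>n. (f^^n) a) ` {..<card (orb f a)}
     \<and> inj_on (\<lambda>n. (f^^n) a) {..<card (orb f a)}"
proof -
  define p where "p = (LEAST n. n > 0 \<and> (f^^n) a = a)"
  have ex: "\<exists>n. n > 0 \<and> (f^^n) a = a" using period_exists[OF assms] by simp
  have p: "p > 0" "(f^^p) a = a" using LeastI_ex[OF ex] unfolding p_def by auto
  have min: "\<And>n. 0 < n \<Longrightarrow> n < p \<Longrightarrow> (f^^n) a \<noteq> a" using not_less_Least unfolding p_def by blast
  have O: "orb f a = (\<lambda>n. (f^^n) a) ` {..<p}"
  proof
    show "orb f a \<subseteq> (\<lambda>n. (f^^n) a) ` {..<p}"
    proof
      fix y assume "y \<in> orb f a"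
      then obtain n where n: "y = (f^^n) a" unfolding orb_def by blast
      have "y = (f^^(n mod p)) a" unfolding n by (rule funpow_mod_period[OF p(2)])
      moreover have "n mod p \<in> {..<p}" using p(1) by simp
      ultimately show "y \<in> (\<lambda>n. (f^^n) a) ` {..<p}" by (rule image_eqI)
    qed
  qed (auto simp: orb_def)
  have I: "inj_on (\<lambda>n. (f^^n) a) {..<p}"
  proof (rule inj_onI)
    fix i j assume ij: "i \<in> {..<p}" "j \<in> {..<p}" "(f^^i) a = (f^^j) a"
    show "i = j"
    proof (rule ccontr)
      assume "i \<noteq> j"
      then consider "i < j" | "j < i" by linarith
      then show False
      proof cases
        case 1
        then have "(f^^(i+(j-i))) a = (f^^i) a" using ij by simp
        then have "(f^^(j-i)) a = a" by (rule funpow_cancel[OF assms(2,3)])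
        moreover have "0 < j - i" "j - i < p" using 1 ij(2) by auto
        ultimately show False using min[of "j-i"] by blast
      next
        case 2
        then have "(f^^(j+(i-j))) a = (f^^j) a" using ij by simp
        then have "(f^^(i-j)) a = a" by (rule funpow_cancel[OF assms(2,3)])
        moreover have "0 < i - j" "i - j < p" using 2 ij(1) by auto
        ultimately show False using min[of "i-j"] by blast
      qed
    qed
  qed
  have "card (orb f a) = p" using O I card_image by fastforce
  then show ?thesis using O I p by simp
qed



lemma jump_int: assumes "x \<le> d" shows "int (jump d x y) = (int y - int x) mod int d"
proof -
  have "int (jump d x y) = (int y + int d - int x) mod int d"
    using assms by (simp add: jump_def zmod_int of_nat_diff)
  also have "\<dots> = (int y - int x + int d) mod int d" by (simp add: algebra_simps)
  also have "\<dots> = (int y - int x) mod int d" by simp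
  finally show ?thesis .
qed

lemma jump_lt: assumes "0 < d" shows "jump d x y < d"
  using assms by (simp add: jump_def)

lemma jump_pair:
  assumes "x \<in> {1..d}" "y \<in> {1..d}" "jump d x y \<noteq> 0"
  shows "jump d x y + jump d y x = d"
proof -
  have "x \<noteq> y" using assms by (auto simp: jump_def)
  then consider "x < y" | "y < x" by linarith
  then show ?thesis
  proof cases
    case 1
    have "jump d x y = y - x" using 1 assms unfolding jump_def
      by (simp add: mod_if) 
    moreover have "jump d y x = x + d - y" using 1 assms unfolding jump_def by (simp add: mod_if)
    ultimately show ?thesis using 1 assms by simp
  next
    case 2
    have "jump d y x = x - y" using 2 assms unfolding jump_def
      by (simp add: mod_if)
    moreover have "jump d x y = y + d - x" using 2 assms unfolding jump_def by (simp add: mod_if)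
    ultimately show ?thesis using 2 assms by simp
  qed
qed

lemma jump_compose:
  assumes "x \<in> {1..d}" "y \<in> {1..d}" "z \<in> {1..d}" "k \<le> d"
    and "jump d x y = d + 1 - k" "jump d z y \<le> d - k"
  shows "int (jump d x z) = int (jump d x y) - int (jump d z y) \<and> jump d x z \<noteq> 0"
proof -
  have d0: "0 < d" using assms by auto
  have "jump d x y < d" using jump_lt d0 by blast
  then have k2: "2 \<le> k" using assms(5) by linarith
  have jxz: "int (jump d x z) = (int z - int x) mod int d" by (rule jump_int) (use assms(1) in simp)
  have jxy: "int (jump d x y) = (int y - int x) mod int d" by (rule jump_int) (use assms(1) in simp)
  have jzy: "int (jump d z y) = (int y - int z) mod int d" by (rule jump_int) (use assms(3) in simp)
  have "int z - int x = (int y - int x) - (int y - int z)" by simp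
  then have e: "int (jump d x z) = ((int y - int x) mod int d - (int y - int z) mod int d) mod int d"
    using jxz by (simp add: mod_diff_eq)
  have "(int y - int x) mod int d = int (jump d x y)" using jxy by simp
  moreover have "(int y - int z) mod int d = int (jump d z y)" using jzy by simp
  ultimately have e2: "int (jump d x z) = (int (jump d x y) - int (jump d z y)) mod int d"
    using e by simp
  have lo: "0 < int (jump d x y) - int (jump d z y)" using assms k2 by linarith
  have hi: "int (jump d x y) - int (jump d z y) < int d" using assms k2 by linarith
  have "int (jump d x z) = int (jump d x y) - int (jump d z y)"
    using e2 lo hi by simp
  then show ?thesis using lo by linarith
qed

lemma outer_step_arith:
  assumes "m < d" "1 < d"
  shows "jump d (d - (Suc m + d - 1) mod d) (d - (m + d - 1) mod d) = 1"
proof (cases m)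
  case 0
  then show ?thesis using assms by (simp add: jump_def)
next
  case (Suc m')
  have a: "(Suc m + d - 1) mod d = m" using assms by simp
  have "m + d - 1 = m' + d" using Suc by simp
  then have b: "(m + d - 1) mod d = m'" using assms Suc by simp
  have "Suc d mod d = Suc 0" using assms(2) by (simp add: mod_Suc)
  then show ?thesis using a b Suc assms by (simp add: jump_def)
qed

lemma idx_arith:
  assumes "Suc m mod d = n mod d" "m < d"
  shows "(n + d - 1) mod d = m"
proof -
  have d0: "0 < d" using assms by auto
  have "n + d - 1 = n + (d - 1)" using d0 by simp
  then have "(n + d - 1) mod d = (n mod d + (d - 1)) mod d"
    by (simp only: mod_add_left_eq)
  also have "\<dots> = (Suc m mod d + (d - 1)) mod d" using assms by simp
  also have "\<dots> = (Suc m + (d - 1)) mod d" by (rule mod_add_left_eq)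
  also have "Suc m + (d - 1) = m + d" using d0 by simp
  finally show ?thesis using assms by simp
qed

lemma idx_arith2:
  assumes "0 < d"
  shows "Suc ((n + d - 1) mod d) mod d = n mod d"
proof -
  have "Suc ((n + d - 1) mod d) mod d = Suc (n + d - 1) mod d" by (simp add: mod_Suc_eq)
  also have "Suc (n + d - 1) = n + d" using assms by simp
  finally show ?thesis by simp
qed



locale gsl =
  fixes D :: "'a set" and \<alpha> \<sigma> :: "'a \<Rightarrow> 'a" and d :: nat and oa :: 'a and lab :: "'a \<Rightarrow> nat"
  assumes dm: "d_map D \<alpha> \<sigma> d oa" and gs: "GS_labeling D \<alpha> \<sigma> d oa lab"
begin

abbreviation "fs \<equiv> face_succ D \<alpha> \<sigma>"
abbreviation "Ob \<equiv> orb fs oa"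
abbreviation "oo n \<equiv> (fs ^^ n) oa"

lemma fin: "finite D" and sig: "bij_betw \<sigma> D D"
  and alph: "\<And>a. a \<in> D \<Longrightarrow> \<alpha> a \<in> D \<and> \<alpha> a \<noteq> a \<and> \<alpha> (\<alpha> a) = a"
  and euler: "int (card (orb \<sigma> ` D)) - int (card (orb \<alpha> ` D)) + int (card (orb fs ` D)) = 2"
  and d3: "3 \<le> d" and oaD: "oa \<in> D" and cardO: "card Ob = d" and injO: "inj_on (orb \<sigma>) Ob"
  and degle: "\<And>a. a \<in> D \<Longrightarrow> a \<notin> Ob \<Longrightarrow> card (orb fs a) \<le> d"
  using dm unfolding d_map_def plane_map_def by auto

lemma lab_in: "\<And>a. inner_arc D \<alpha> \<sigma> oa a \<Longrightarrow> lab a \<in> {1..d}"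
  and lab_out: "\<And>i. i \<in> {1..d} \<Longrightarrow> lab (outer_arc D \<alpha> \<sigma> d oa i) = i"
  and AL0: "\<And>i a. i \<in> {1..d} \<Longrightarrow> inner_arc D \<alpha> \<sigma> oa a \<Longrightarrow> orb \<sigma> a = orb \<sigma> (outer_arc D \<alpha> \<sigma> d oa i) \<Longrightarrow> lab a = i"
  and AL1: "\<And>a. inner_vertex D \<alpha> \<sigma> oa a \<Longrightarrow> (\<Sum>b\<in>orb \<sigma> a. jump d (lab b) (lab (\<sigma> b))) = d"
  and AL2: "\<And>a. inner_vertex D \<alpha> \<sigma> oa a \<Longrightarrow> jump d (lab a) (lab (\<sigma> a)) \<le> d - card (orb fs a)"
  and AL3: "\<And>a. inner_arc D \<alpha> \<sigma> oa a \<Longrightarrow> jump d (lab a) (lab (\<alpha> a)) = d + 1 - card (orb fs a)"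
  using gs unfolding GS_labeling_def by blast+

lemma alpha_bij: "bij_betw \<alpha> D D"
proof -
  have "inj_on \<alpha> D" by (metis alph inj_onI)
  moreover have "\<alpha> ` D = D" using alph by (metis image_subset_iff subsetI subset_antisym imageI)
  ultimately show ?thesis by (simp add: bij_betw_def)
qed

lemma fs_bij: "bij_betw fs D D"
proof -
  have "bij_betw (inv_into D \<sigma> \<circ> \<alpha>) D D"
    using bij_betw_trans[OF alpha_bij bij_betw_inv_into[OF sig]] .
  moreover have "fs = inv_into D \<sigma> \<circ> \<alpha>" by (rule ext) (simp add: face_succ_def)
  ultimately show ?thesis by simp
qed

lemma fsD: "b \<in> D \<Longrightarrow> fs b \<in> D" using fs_bij by (meson bij_betwE)

lemma sig_fs: "b \<in> D \<Longrightarrow> \<sigma> (fs b) = \<alpha> b"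
  unfolding face_succ_def using sig alph by (metis bij_betw_def f_inv_into_f)

lemma vert_fs: assumes "b \<in> D" shows "orb \<sigma> (fs b) = orb \<sigma> (\<alpha> b)"
proof -
  have "\<alpha> b \<in> orb \<sigma> (fs b)" using sig_fs[OF assms] f_in_orb self_in_orb by metis
  then show ?thesis using orb_eq[OF fin sig fsD[OF assms]] by metis
qed

lemma O_sub: "Ob \<subseteq> D" using orb_sub_D[OF fs_bij oaD] .
lemma fs_O: "x \<in> Ob \<Longrightarrow> fs x \<in> Ob" using f_in_orb by metis
lemma orbO: "x \<in> Ob \<Longrightarrow> orb fs x = Ob" using orb_eq[OF fin fs_bij oaD] by blast
lemma o_in: "oo n \<in> Ob" unfolding orb_def by blast

lemma fs_notO: assumes "b \<in> D" "b \<notin> Ob" shows "fs b \<notin> Ob"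
proof
  assume "fs b \<in> Ob"
  then have "orb fs (fs b) = Ob" using orbO by blast
  moreover have "orb fs (fs b) = orb fs b"
    using orb_eq[OF fin fs_bij assms(1)] f_in_orb self_in_orb by metis
  ultimately show False using assms self_in_orb by metis
qed

lemma orb_fs_fs: "b \<in> D \<Longrightarrow> orb fs (fs b) = orb fs b"
  using orb_eq[OF fin fs_bij] f_in_orb self_in_orb by metis

lemma d0: "0 < d" using d3 by simp

lemma o_props: "oo d = oa" "Ob = oo ` {..<d}" "inj_on oo {..<d}"
  using orbit_card[OF fin fs_bij oaD] cardO by auto

lemma o_mod: "oo n = oo (n mod d)"
  by (rule funpow_mod_period[OF o_props(1)])

lemma o_inj: assumes "oo i = oo j" shows "i mod d = j mod d"
proof -
  have "oo (i mod d) = oo (j mod d)" using assms o_mod by metis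
  then show ?thesis using o_props(3) d0 unfolding inj_on_def by simp
qed

lemma sig_o: "\<sigma> (oo (Suc m)) = \<alpha> (oo m)"
  using sig_fs[of "oo m"] o_in O_sub by auto

lemma alphaO: assumes "b \<in> Ob" shows "\<alpha> b \<notin> Ob"
proof
  assume ab: "\<alpha> b \<in> Ob"
  have bD: "b \<in> D" using assms O_sub by blast
  have "fs b \<in> Ob" using fs_O assms by blast
  moreover have "orb \<sigma> (fs b) = orb \<sigma> (\<alpha> b)" using vert_fs bD by blast
  ultimately have e1: "fs b = \<alpha> b" using injO ab unfolding inj_on_def by blast
  have "fs (\<alpha> b) \<in> Ob" using fs_O ab by blast
  moreover have "orb \<sigma> (fs (\<alpha> b)) = orb \<sigma> b" using vert_fs alph bD by metis
  ultimately have e2: "fs (\<alpha> b) = b" using injO assms unfolding inj_on_def by blast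
  have "(fs^^n) b \<in> {b, fs b}" for n
    by (induct n) (use e1 e2 in auto)
  then have "orb fs b \<subseteq> {b, fs b}" unfolding orb_def by blast
  then have "card (orb fs b) \<le> 2" by (metis card_2_iff card_mono finite.emptyI finite.insertI card_insert_le order_trans card_Suc_eq le_refl
      insert_absorb2 nat_le_linear one_add_one card_1_singleton_iff)
  then show False using orbO[OF assms] cardO d3 by simp
qed

lemma outer_arc_eq: "i \<in> {1..d} \<Longrightarrow> outer_arc D \<alpha> \<sigma> d oa i = \<sigma> (oo (Suc (d - i)))"
  unfolding outer_arc_def using sig_o by simp

lemma idx_in: "d - (n + d - 1) mod d \<in> {1..d}"
  using d0 by (simp add: Suc_le_eq)

lemma label_vertex:
  assumes "x \<in> D" "x \<notin> Ob" "orb \<sigma> x = orb \<sigma> (oo n)"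
  shows "lab x = d - (n + d - 1) mod d"
proof (cases "inner_arc D \<alpha> \<sigma> oa x")
  case True
  let ?i = "d - (n + d - 1) mod d"
  have i: "?i \<in> {1..d}" by (rule idx_in)
  have "d - ?i = (n + d - 1) mod d" using d0 by (simp add: less_imp_le)
  then have "oo (Suc (d - ?i)) = oo n" using o_mod idx_arith2[OF d0] by metis
  then have "orb \<sigma> (outer_arc D \<alpha> \<sigma> d oa ?i) = orb \<sigma> (oo n)"
    using outer_arc_eq[OF i] orb_eq[OF fin sig] o_in O_sub f_in_orb self_in_orb
    by (metis subsetD)
  then show ?thesis using AL0[OF i True] assms by simp
next
  case False
  then have "\<alpha> x \<in> Ob" using assms unfolding inner_arc_def by blast
  then obtain m where m: "m < d" "\<alpha> x = oo m" using o_props(2) by auto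
  have xe: "x = \<alpha> (oo m)" using m alph assms by metis
  have i: "d - m \<in> {1..d}" using m by auto
  have "outer_arc D \<alpha> \<sigma> d oa (d - m) = x" unfolding outer_arc_def using xe m by simp
  then have lx: "lab x = d - m" using lab_out[OF i] by simp
  have "x = \<sigma> (oo (Suc m))" using xe sig_o by simp
  then have "orb \<sigma> x = orb \<sigma> (oo (Suc m))"
    using orb_eq[OF fin sig] o_in O_sub f_in_orb self_in_orb by (metis subsetD)
  then have "oo (Suc m) = oo n" using injO assms(3) o_in unfolding inj_on_def by metis
  then have "Suc m mod d = n mod d" using o_inj by blast
  then have "(n + d - 1) mod d = m" using idx_arith m by blast
  then show ?thesis using lx by simp
qed

end



context gsl begin

abbreviation "J x y \<equiv> jump d (lab x) (lab y)"
abbreviation "IV x \<equiv> inner_vertex D \<alpha> \<sigma> oa x"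
abbreviation "IA x \<equiv> inner_arc D \<alpha> \<sigma> oa x"

definition "Af b = (if \<alpha> b \<in> Ob then 1 else int (J b (\<alpha> b)))"
definition "Cf x = (if IV x then int (J x (\<sigma> x)) else 0)"

lemma oo_D: "oo n \<in> D" using O_sub o_in by blast

lemma orb_sig_step: assumes "z \<in> D" shows "orb \<sigma> (\<sigma> z) = orb \<sigma> z"
  by (rule orb_eq[OF fin sig assms f_in_orb[OF self_in_orb[of z \<sigma>]]])

lemma IV_IA: assumes "IV x" shows "IA x"
proof -
  have xD: "x \<in> D" using assms unfolding inner_vertex_def by (rule conjunct1)
  have dis: "orb \<sigma> x \<inter> Ob = {}" using assms unfolding inner_vertex_def by (rule conjunct2)
  have "x \<notin> Ob" using dis self_in_orb[of x \<sigma>] by blast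
  moreover have "\<alpha> x \<notin> Ob"
  proof
    assume "\<alpha> x \<in> Ob"
    then have "fs (\<alpha> x) \<in> Ob" by (rule fs_O)
    moreover have "orb \<sigma> (fs (\<alpha> x)) = orb \<sigma> x" using vert_fs[of "\<alpha> x"] alph[OF xD] by simp
    ultimately show False using dis self_in_orb[of "fs (\<alpha> x)" \<sigma>] by blast
  qed
  ultimately show ?thesis using xD unfolding inner_arc_def by blast
qed

lemma lab_range: assumes "b \<in> D" "b \<notin> Ob" shows "lab b \<in> {1..d}"
proof (cases "IA b")
  case True then show ?thesis by (rule lab_in)
next
  case False
  then have "\<alpha> b \<in> Ob" using assms unfolding inner_arc_def by blast
  then obtain m where m: "m < d" "\<alpha> b = oo m" using o_props(2) by auto
  have "b = \<alpha> (\<alpha> b)" using alph[OF assms(1)] by simp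
  also have "\<dots> = \<sigma> (oo (Suc m))" using m(2) sig_o[of m] by simp
  finally have eq: "b = \<sigma> (oo (Suc m))" .
  have "orb \<sigma> b = orb \<sigma> (oo (Suc m))" unfolding eq by (rule orb_sig_step[OF oo_D])
  then have "lab b = d - (Suc m + d - 1) mod d" by (rule label_vertex[OF assms])
  then show ?thesis using idx_in[of "Suc m"] by (simp only:)
qed

lemma inner_deg_bound: assumes "IA b" shows "jump d (lab b) (lab (\<alpha> b)) \<noteq> 0"
proof -
  have "b \<in> D" "b \<notin> Ob" using assms unfolding inner_arc_def by auto
  then have "card (orb fs b) \<le> d" by (rule degle)
  then show ?thesis using AL3[OF assms] by simp
qed

lemma per_arc:
  assumes bD: "b \<in> D" and bO: "b \<notin> Ob"
  shows "int (J b (fs b)) = Af b - Cf (fs b) \<and> J b (fs b) \<noteq> 0"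
proof -
  have fbD: "fs b \<in> D" using fsD[OF bD] .
  have fbO: "fs b \<notin> Ob" using fs_notO[OF bD bO] .
  have abD: "\<alpha> b \<in> D" using alph[OF bD] by simp
  have vf: "orb \<sigma> (fs b) = orb \<sigma> (\<alpha> b)" using vert_fs[OF bD] .
  show ?thesis
  proof (cases "\<alpha> b \<in> Ob")
    case True
    then obtain m where m: "m < d" "\<alpha> b = oo m" using o_props(2) by auto
    have "b = \<alpha> (\<alpha> b)" using alph[OF bD] by simp
    also have "\<dots> = \<sigma> (oo (Suc m))" using m(2) sig_o[of m] by simp
    finally have eq: "b = \<sigma> (oo (Suc m))" .
    have "orb \<sigma> b = orb \<sigma> (oo (Suc m))" unfolding eq by (rule orb_sig_step[OF oo_D])
    then have l1: "lab b = d - (Suc m + d - 1) mod d" by (rule label_vertex[OF bD bO])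
    have l2: "lab (fs b) = d - (m + d - 1) mod d" using label_vertex[OF fbD fbO] vf m by simp
    have "1 < d" using d3 by simp
    then have j: "J b (fs b) = 1" using l1 l2 outer_step_arith[OF m(1)] by simp
    have "\<alpha> b \<in> orb \<sigma> (fs b)" using vf self_in_orb[of "\<alpha> b" \<sigma>] by simp
    then have "\<not> IV (fs b)" using True unfolding inner_vertex_def by blast
    then show ?thesis using j True unfolding Af_def Cf_def by simp
  next
    case aO: False
    have bIA: "IA b" using bD bO aO unfolding inner_arc_def by blast
    show ?thesis
    proof (cases "IV (\<alpha> b)")
      case False
      then obtain c where c: "c \<in> orb \<sigma> (\<alpha> b)" "c \<in> Ob" using abD unfolding inner_vertex_def by blast
      then obtain n where n: "c = oo n" unfolding orb_def by blast
      have oc: "orb \<sigma> (\<alpha> b) = orb \<sigma> (oo n)" using orb_eq[OF fin sig abD c(1)] n by simp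
      have l1: "lab (\<alpha> b) = d - (n + d - 1) mod d" using label_vertex[OF abD aO oc] .
      have l2: "lab (fs b) = d - (n + d - 1) mod d" using label_vertex[OF fbD fbO] vf oc by simp
      have "\<not> IV (fs b)" using False vf fbD abD unfolding inner_vertex_def by simp
      then show ?thesis using l1 l2 aO inner_deg_bound[OF bIA] unfolding Af_def Cf_def by simp
    next
      case True
      have fIV: "IV (fs b)" using True vf fbD unfolding inner_vertex_def by simp
      have r1: "lab b \<in> {1..d}" using lab_range[OF bD bO] .
      have r2: "lab (\<alpha> b) \<in> {1..d}" using lab_range[OF abD aO] .
      have r3: "lab (fs b) \<in> {1..d}" using lab_range[OF fbD fbO] .
      have k: "card (orb fs b) \<le> d" using degle[OF bD bO] .
      have a3: "J b (\<alpha> b) = d + 1 - card (orb fs b)" using AL3[OF bIA] .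
      have a2: "J (fs b) (\<alpha> b) \<le> d - card (orb fs b)"
        using AL2[OF fIV] sig_fs[OF bD] orb_fs_fs[OF bD] by simp
      have "int (J b (fs b)) = int (J b (\<alpha> b)) - int (J (fs b) (\<alpha> b)) \<and> J b (fs b) \<noteq> 0"
        using jump_compose[OF r1 r2 r3 k a3 a2] .
      then show ?thesis using fIV aO sig_fs[OF bD] unfolding Af_def Cf_def by simp
    qed
  qed
qed

abbreviation "R \<equiv> D - Ob"
abbreviation "II \<equiv> {b \<in> D. IA b}"
abbreviation "Vin \<equiv> {x \<in> D. IV x}"

lemma R_closed: assumes "x \<in> R" shows "orb fs x \<subseteq> R"
proof
  fix y assume y: "y \<in> orb fs x"
  have xD: "x \<in> D" using assms by simp
  have yD: "y \<in> D" using subsetD[OF orb_sub_D[OF fs_bij xD] y] .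
  have e: "orb fs y = orb fs x" using orb_eq[OF fin fs_bij xD y] .
  have "y \<notin> Ob"
  proof
    assume "y \<in> Ob"
    then have "orb fs y = Ob" by (rule orbO)
    then show False using e assms self_in_orb[of x fs] by simp
  qed
  then show "y \<in> R" using yD by simp
qed

lemma Vin_closed: assumes "x \<in> Vin" shows "orb \<sigma> x \<subseteq> Vin"
proof
  fix y assume y: "y \<in> orb \<sigma> x"
  have xD: "x \<in> D" using assms by simp
  have yD: "y \<in> D" using subsetD[OF orb_sub_D[OF sig xD] y] .
  have e: "orb \<sigma> y = orb \<sigma> x" using orb_eq[OF fin sig xD y] .
  then show "y \<in> Vin" using assms yD unfolding inner_vertex_def by simp
qed

lemma sumC: "(\<Sum>b\<in>R. Cf (fs b)) = int d * int (card (orb \<sigma> ` Vin))"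
proof -
  have bR: "bij_betw fs R R"
    using bij_betw_DiffI[OF fs_bij bij_orb[OF fin fs_bij oaD] O_sub O_sub] .
  have "(\<Sum>b\<in>R. Cf (fs b)) = (\<Sum>b\<in>R. Cf b)" using sum.reindex_bij_betw[OF bR, of Cf] .
  also have "\<dots> = (\<Sum>b\<in>R. if b \<in> Vin then int (J b (\<sigma> b)) else 0)"
    by (rule sum.cong) (simp_all add: Cf_def)
  also have "\<dots> = (\<Sum>b\<in>R \<inter> Vin. int (J b (\<sigma> b)))"
    using fin by (simp add: sum.inter_restrict)
  also have "R \<inter> Vin = Vin"
  proof
    show "Vin \<subseteq> R \<inter> Vin"
    proof
      fix x assume x: "x \<in> Vin"
      then have "IA x" using IV_IA by simp
      then show "x \<in> R \<inter> Vin" using x unfolding inner_arc_def by simp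
    qed
  qed simp
  also have "(\<Sum>b\<in>Vin. int (J b (\<sigma> b))) = (\<Sum>c\<in>orb \<sigma> ` Vin. \<Sum>b\<in>c. int (J b (\<sigma> b)))"
    by (rule sum_orbits[OF fin sig _ Vin_closed]) simp_all
  also have "\<dots> = (\<Sum>c\<in>orb \<sigma> ` Vin. int d)"
  proof (rule sum.cong)
    fix c assume "c \<in> orb \<sigma> ` Vin"
    then obtain x where x: "x \<in> Vin" "c = orb \<sigma> x" by (rule imageE) simp
    have "(\<Sum>b\<in>c. int (J b (\<sigma> b))) = int (\<Sum>b\<in>c. J b (\<sigma> b))" by simp
    also have "\<dots> = int d" using AL1[of x] x by simp
    finally show "(\<Sum>b\<in>c. int (J b (\<sigma> b))) = int d" .
  qed simp
  finally show ?thesis by simp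
qed

lemma alphaOb_eq: "{b \<in> R. \<alpha> b \<in> Ob} = \<alpha> ` Ob"
proof
  show "{b \<in> R. \<alpha> b \<in> Ob} \<subseteq> \<alpha> ` Ob"
  proof
    fix b assume b: "b \<in> {b \<in> R. \<alpha> b \<in> Ob}"
    then have "b = \<alpha> (\<alpha> b)" using alph[of b] by simp
    then show "b \<in> \<alpha> ` Ob" using b by (intro image_eqI[of b \<alpha> "\<alpha> b"]) simp_all
  qed
  show "\<alpha> ` Ob \<subseteq> {b \<in> R. \<alpha> b \<in> Ob}"
  proof
    fix y assume "y \<in> \<alpha> ` Ob"
    then obtain x where x: "x \<in> Ob" "y = \<alpha> x" by (rule imageE) simp
    have xD: "x \<in> D" using subsetD[OF O_sub x(1)] .
    show "y \<in> {b \<in> R. \<alpha> b \<in> Ob}" using alph[OF xD] alphaO[OF x(1)] x by simp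
  qed
qed

lemma card_alphaOb: "card (\<alpha> ` Ob) = d"
proof -
  have "inj_on \<alpha> Ob" using inj_on_subset[OF bij_betw_imp_inj_on[OF alpha_bij] O_sub] .
  then show ?thesis using card_image cardO by metis
qed

lemma sumA: "(\<Sum>b\<in>R. Af b) = int d + (\<Sum>b\<in>II. int (J b (\<alpha> b)))"
proof -
  have "(\<Sum>b\<in>R. Af b) = (\<Sum>b\<in>R \<inter> {b. \<alpha> b \<in> Ob}. 1) + (\<Sum>b\<in>R \<inter> - {b. \<alpha> b \<in> Ob}. int (J b (\<alpha> b)))"
    unfolding Af_def using fin by (simp add: sum.If_cases)
  moreover have "R \<inter> {b. \<alpha> b \<in> Ob} = \<alpha> ` Ob" using alphaOb_eq by blast
  moreover have "R \<inter> - {b. \<alpha> b \<in> Ob} = II" unfolding inner_arc_def by blast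
  ultimately show ?thesis using card_alphaOb by simp
qed

lemma sumII: "2 * (\<Sum>b\<in>II. int (J b (\<alpha> b))) = int d * int (card II)"
proof -
  have bI: "bij_betw \<alpha> II II"
  proof -
    have "inj_on \<alpha> II" by (rule inj_on_subset[OF bij_betw_imp_inj_on[OF alpha_bij]]) blast
    moreover have "\<alpha> ` II = II"
    proof
      show "\<alpha> ` II \<subseteq> II"
      proof
        fix y assume "y \<in> \<alpha> ` II"
        then obtain x where x: "x \<in> II" "y = \<alpha> x" by (rule imageE) simp
        then show "y \<in> II" using alph[of x] unfolding inner_arc_def by auto
      qed
      show "II \<subseteq> \<alpha> ` II"
      proof
        fix y assume y: "y \<in> II"
        then have "y = \<alpha> (\<alpha> y)" "\<alpha> y \<in> II" using alph[of y] unfolding inner_arc_def by auto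
        then show "y \<in> \<alpha> ` II" by (intro image_eqI[of y \<alpha> "\<alpha> y"]) simp_all
      qed
    qed
    ultimately show ?thesis by (simp add: bij_betw_def)
  qed
  have "(\<Sum>b\<in>II. int (J b (\<alpha> b))) = (\<Sum>b\<in>II. int (J (\<alpha> b) (\<alpha> (\<alpha> b))))"
    using sum.reindex_bij_betw[OF bI, of "\<lambda>b. int (J b (\<alpha> b))"] by simp
  also have "\<dots> = (\<Sum>b\<in>II. int (J (\<alpha> b) b))"
    by (rule sum.cong) (use alph in auto)
  finally have e: "(\<Sum>b\<in>II. int (J b (\<alpha> b))) = (\<Sum>b\<in>II. int (J (\<alpha> b) b))" .
  have "2 * (\<Sum>b\<in>II. int (J b (\<alpha> b))) = (\<Sum>b\<in>II. int (J b (\<alpha> b)) + int (J (\<alpha> b) b))"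
    using e by (simp add: sum.distrib)
  also have "\<dots> = (\<Sum>b\<in>II. int d)"
  proof (rule sum.cong)
    fix b assume b: "b \<in> II"
    then have ia: "IA b" by simp
    have "IA (\<alpha> b)" using b alph[of b] unfolding inner_arc_def by auto
    then have "lab b \<in> {1..d}" "lab (\<alpha> b) \<in> {1..d}" using lab_in ia by auto
    then have "J b (\<alpha> b) + J (\<alpha> b) b = d" using jump_pair inner_deg_bound[OF ia] by blast
    then show "int (J b (\<alpha> b)) + int (J (\<alpha> b) b) = int d" by linarith
  qed simp
  finally show ?thesis by simp
qed

lemma orb_alpha: assumes "a \<in> D" shows "orb \<alpha> a = {a, \<alpha> a}"
proof
  have "(\<alpha>^^n) a \<in> {a, \<alpha> a}" for n by (induct n) (use alph assms in auto)
  then show "orb \<alpha> a \<subseteq> {a, \<alpha> a}" unfolding orb_def by blast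
  show "{a, \<alpha> a} \<subseteq> orb \<alpha> a" using self_in_orb[of a \<alpha>] f_in_orb[OF self_in_orb[of a \<alpha>]] by simp
qed

lemma cardD_E: "card D = 2 * card (orb \<alpha> ` D)"
proof -
  have "card D = (\<Sum>b\<in>D. 1)" by simp
  also have "\<dots> = (\<Sum>c\<in>orb \<alpha> ` D. \<Sum>b\<in>c. 1)"
    by (rule sum_orbits[OF fin alpha_bij]) (simp_all add: orb_sub_D[OF alpha_bij])
  also have "\<dots> = (\<Sum>c\<in>orb \<alpha> ` D. 2)"
  proof (rule sum.cong)
    fix c assume "c \<in> orb \<alpha> ` D"
    then obtain a where a: "a \<in> D" "c = orb \<alpha> a" by (rule imageE) simp
    then show "(\<Sum>b\<in>c. 1) = (2::nat)" using orb_alpha[OF a(1)] alph[OF a(1)] by auto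
  qed simp
  finally show ?thesis by simp
qed

lemma cardD: "card D = 2 * d + card II"
proof -
  have D: "D = Ob \<union> (\<alpha> ` Ob \<union> II)"
  proof
    show "D \<subseteq> Ob \<union> (\<alpha> ` Ob \<union> II)"
    proof
      fix x assume x: "x \<in> D"
      show "x \<in> Ob \<union> (\<alpha> ` Ob \<union> II)"
      proof (cases "x \<in> Ob \<or> \<alpha> x \<in> Ob")
        case True
        then show ?thesis using x alphaOb_eq by blast
      next
        case False
        then show ?thesis using x unfolding inner_arc_def by blast
      qed
    qed
    show "Ob \<union> (\<alpha> ` Ob \<union> II) \<subseteq> D" using O_sub alphaOb_eq by blast
  qed
  have d1: "Ob \<inter> (\<alpha> ` Ob \<union> II) = {}" using alphaOb_eq unfolding inner_arc_def by blast
  have d2: "\<alpha> ` Ob \<inter> II = {}" using alphaOb_eq unfolding inner_arc_def by blast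
  have f: "finite Ob" "finite (\<alpha> ` Ob)" "finite II" using fin O_sub finite_subset by auto
  have "card (Ob \<union> (\<alpha> ` Ob \<union> II)) = card Ob + card (\<alpha> ` Ob \<union> II)"
    by (rule card_Un_disjoint) (use f d1 in auto)
  also have "card (\<alpha> ` Ob \<union> II) = card (\<alpha> ` Ob) + card II"
    by (rule card_Un_disjoint) (use f d2 in auto)
  finally show ?thesis using cardO card_alphaOb D by simp
qed

lemma cardV: "card (orb \<sigma> ` D) = d + card (orb \<sigma> ` Vin)"
proof -
  have U: "orb \<sigma> ` D = orb \<sigma> ` Ob \<union> orb \<sigma> ` Vin"
  proof
    show "orb \<sigma> ` D \<subseteq> orb \<sigma> ` Ob \<union> orb \<sigma> ` Vin"
    proof
      fix c assume "c \<in> orb \<sigma> ` D"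
      then obtain x where x: "x \<in> D" "c = orb \<sigma> x" by (rule imageE) simp
      show "c \<in> orb \<sigma> ` Ob \<union> orb \<sigma> ` Vin"
      proof (cases "IV x")
        case True then show ?thesis using x by blast
      next
        case False
        then obtain y where y: "y \<in> orb \<sigma> x" "y \<in> Ob" using x unfolding inner_vertex_def by blast
        have "orb \<sigma> y = orb \<sigma> x" using orb_eq[OF fin sig x(1) y(1)] .
        then show ?thesis using x y by blast
      qed
    qed
    show "orb \<sigma> ` Ob \<union> orb \<sigma> ` Vin \<subseteq> orb \<sigma> ` D" using O_sub by blast
  qed
  have dis: "orb \<sigma> ` Ob \<inter> orb \<sigma> ` Vin = {}"
  proof (rule ccontr)
    assume "orb \<sigma> ` Ob \<inter> orb \<sigma> ` Vin \<noteq> {}"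
    then obtain x y where xy: "x \<in> Ob" "y \<in> Vin" "orb \<sigma> x = orb \<sigma> y" by blast
    have "x \<in> orb \<sigma> y" using xy(3) self_in_orb[of x \<sigma>] by simp
    then show False using xy(1,2) unfolding inner_vertex_def by blast
  qed
  have f: "finite (orb \<sigma> ` Ob)" "finite (orb \<sigma> ` Vin)" using fin O_sub finite_subset by auto
  have "card (orb \<sigma> ` Ob) = d" using card_image[OF injO] cardO by simp
  then show ?thesis using card_Un_disjoint[OF f dis] U by simp
qed

lemma cardF: "card (orb fs ` D) = 1 + card (orb fs ` R)"
proof -
  have U: "orb fs ` D = insert Ob (orb fs ` R)"
  proof
    show "orb fs ` D \<subseteq> insert Ob (orb fs ` R)"
    proof
      fix c assume "c \<in> orb fs ` D"
      then obtain x where x: "x \<in> D" "c = orb fs x" by (rule imageE) simp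
      show "c \<in> insert Ob (orb fs ` R)"
      proof (cases "x \<in> Ob")
        case True then show ?thesis using orbO[OF True] x by simp
      next
        case False then show ?thesis using x by blast
      qed
    qed
    show "insert Ob (orb fs ` R) \<subseteq> orb fs ` D" using oaD by blast
  qed
  have "Ob \<notin> orb fs ` R"
  proof
    assume "Ob \<in> orb fs ` R"
    then obtain x where x: "x \<in> R" "Ob = orb fs x" by (rule imageE) simp
    then show False using self_in_orb[of x fs] by simp
  qed
  moreover have "finite (orb fs ` R)" using fin by simp
  ultimately show ?thesis using U by simp
qed

lemma total: "(\<Sum>b\<in>R. int (J b (fs b))) = int d * int (card (orb fs ` R))"
proof -
  have "(\<Sum>b\<in>R. int (J b (fs b))) = (\<Sum>b\<in>R. Af b - Cf (fs b))"
    by (rule sum.cong) (simp_all add: per_arc)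
  also have "\<dots> = (\<Sum>b\<in>R. Af b) - (\<Sum>b\<in>R. Cf (fs b))" by (simp add: sum_subtractf)
  finally have S: "(\<Sum>b\<in>R. int (J b (fs b))) = int d + (\<Sum>b\<in>II. int (J b (\<alpha> b))) - int d * int (card (orb \<sigma> ` Vin))"
    using sumA sumC by simp
  have E: "int (card D) = 2 * int (card (orb \<alpha> ` D))" using cardD_E by simp
  have D2: "int (card D) = 2 * int d + int (card II)" using cardD by simp
  have V: "int (card (orb \<sigma> ` D)) = int d + int (card (orb \<sigma> ` Vin))" using cardV by simp
  have F: "int (card (orb fs ` D)) = 1 + int (card (orb fs ` R))" using cardF by simp
  have X: "2 * (\<Sum>b\<in>II. int (J b (\<alpha> b))) = int d * int (card II)" using sumII .
  have II: "int (card II) = 2 * int (card (orb \<alpha> ` D)) - 2 * int d" using E D2 by simp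
  have X2: "(\<Sum>b\<in>II. int (J b (\<alpha> b))) = int d * (int (card (orb \<alpha> ` D)) - int d)"
    using X II by (simp add: algebra_simps)
  have FR: "int (card (orb fs ` R)) = 1 + int (card (orb \<alpha> ` D)) - int d - int (card (orb \<sigma> ` Vin))"
    using euler V F by simp
  have "int d * int (card (orb fs ` R)) = int d + int d * int (card (orb \<alpha> ` D)) - int d * int d - int d * int (card (orb \<sigma> ` Vin))"
    unfolding FR by (simp add: algebra_simps)
  moreover have "(\<Sum>b\<in>R. int (J b (fs b))) = int d + int d * int (card (orb \<alpha> ` D)) - int d * int d - int d * int (card (orb \<sigma> ` Vin))"
    unfolding S X2 by (simp add: algebra_simps)
  ultimately show ?thesis by simp
qed

lemma face_ge: assumes "a \<in> R" shows "int d \<le> (\<Sum>b\<in>orb fs a. int (J b (fs b)))"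
proof -
  let ?s = "\<Sum>b\<in>orb fs a. int (J b (fs b))"
  have aD: "a \<in> D" using assms by simp
  have sub: "orb fs a \<subseteq> R" using R_closed[OF assms] .
  have fo: "finite (orb fs a)" using finite_subset[OF sub] fin by simp
  have "?s = (\<Sum>b\<in>orb fs a. (int (lab (fs b)) - int (lab b)) mod int d)"
  proof (rule sum.cong)
    fix b assume "b \<in> orb fs a"
    then have "b \<in> R" using sub by blast
    then have "lab b \<le> d" using lab_range[of b] by simp
    then show "int (J b (fs b)) = (int (lab (fs b)) - int (lab b)) mod int d" by (rule jump_int)
  qed simp
  then have "?s mod int d = (\<Sum>b\<in>orb fs a. int (lab (fs b)) - int (lab b)) mod int d"
    by (simp add: mod_sum_eq)
  also have "(\<Sum>b\<in>orb fs a. int (lab (fs b)) - int (lab b)) = 0"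
    using sum_orb_shift[OF fin fs_bij aD, of "\<lambda>b. int (lab b)"] by (simp add: sum_subtractf)
  finally have m: "?s mod int d = 0" by simp
  have "0 < ?s"
  proof (rule sum_pos)
    show "orb fs a \<noteq> {}" using self_in_orb[of a fs] by blast
    fix b assume "b \<in> orb fs a"
    then have "b \<in> R" using sub by blast
    then show "0 < int (J b (fs b))" using per_arc[of b] by simp
  qed (rule fo)
  then have "int d dvd ?s" "0 < ?s" using m by (simp_all add: mod_0_imp_dvd)
  then show ?thesis using zdvd_imp_le by blast
qed

lemma each_face: assumes "a \<in> R" shows "(\<Sum>b\<in>orb fs a. int (J b (fs b))) = int d"
proof -
  let ?s = "\<lambda>c. \<Sum>b\<in>c. int (J b (fs b))"
  have "(\<Sum>b\<in>R. int (J b (fs b))) = (\<Sum>c\<in>orb fs ` R. ?s c)"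
    by (rule sum_orbits[OF fin fs_bij _ R_closed]) simp_all
  then have "(\<Sum>c\<in>orb fs ` R. ?s c) = (\<Sum>c\<in>orb fs ` R. int d)" using total by (simp add: mult.commute)
  then have z: "(\<Sum>c\<in>orb fs ` R. ?s c - int d) = 0" by (simp add: sum_subtractf)
  have nn: "\<forall>c\<in>orb fs ` R. 0 \<le> ?s c - int d"
  proof
    fix c assume "c \<in> orb fs ` R"
    then obtain x where x: "x \<in> R" "c = orb fs x" by (rule imageE) simp
    then show "0 \<le> ?s c - int d" using face_ge[OF x(1)] by simp
  qed
  have fR: "finite (orb fs ` R)" using fin by simp
  have iff: "(\<Sum>c\<in>orb fs ` R. ?s c - int d) = 0 \<longleftrightarrow> (\<forall>c\<in>orb fs ` R. ?s c - int d = 0)"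
    by (rule sum_nonneg_eq_0_iff[OF fR]) (use nn in blast)
  have "\<forall>c\<in>orb fs ` R. ?s c - int d = 0" using iff z by blast
  then show ?thesis using assms by simp
qed

lemma main: "\<forall>a\<in>D. a \<notin> Ob \<longrightarrow>
     (\<forall>b\<in>orb fs a. J b (fs b) \<noteq> 0) \<and> (\<Sum>b\<in>orb fs a. J b (fs b)) = d"
proof (rule ballI, rule impI)
  fix a assume aD: "a \<in> D" and aO: "a \<notin> Ob"
  then have aR: "a \<in> R" by simp
  have sub: "orb fs a \<subseteq> R" using R_closed[OF aR] .
  have P1: "\<forall>b\<in>orb fs a. J b (fs b) \<noteq> 0"
  proof
    fix b assume "b \<in> orb fs a"
    then have "b \<in> R" using sub by blast
    then show "J b (fs b) \<noteq> 0" using per_arc[of b] by simp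
  qed
  have "int (\<Sum>b\<in>orb fs a. J b (fs b)) = int d" using each_face[OF aR] by simp
  then have P2: "(\<Sum>b\<in>orb fs a. J b (fs b)) = d" by linarith
  show "(\<forall>b\<in>orb fs a. J b (fs b) \<noteq> 0) \<and> (\<Sum>b\<in>orb fs a. J b (fs b)) = d"
    using P1 P2 by (rule conjI)
qed

end

theorem mainTheorem15:
  assumes "d_map D \<alpha> \<sigma> d oa"
    and "GS_labeling D \<alpha> \<sigma> d oa lab"
  shows "\<forall>a\<in>D. a \<notin> orb (face_succ D \<alpha> \<sigma>) oa \<longrightarrow>
     (\<forall>b\<in>orb (face_succ D \<alpha> \<sigma>) a. jump d (lab b) (lab (face_succ D \<alpha> \<sigma> b)) \<noteq> 0) \<and>
     (\<Sum>b\<in>orb (face_succ D \<alpha> \<sigma>) a. jump d (lab b) (lab (face_succ D \<alpha> \<sigma> b))) = d"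
  using gsl.main[OF gsl.intro[OF assms]] .

end
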